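(* Let $B$ and $C$ be groups with $C$ abelian, and let $\phi: C\to \mathrm{Aut}(B)$, $c\mapsto\phi_c$, and $\psi: B\to\mathrm{Aut}(C)$, $b\mapsto\psi_b$, be homomorphisms such that $\phi_{\psi_b(c)} = \phi_c$ for all $b\in B$, $c\in C$. On $A = B\times C$ define \[ (b_1,c_1)\cdot(b_2,c_2) = (b_1\phi_{c_1}(b_2),\, c_1c_2),\qquad (b_1,c_1)\circ(b_2,c_2) = (b_1b_2,\, c_1\psi_{b_1}(c_2)). \] Then $(A,\cdot,\circ)$ is a skew brace, i.e. $a_1\circ(a_2\cdot a_3) = (a_1\circ a_2)\cdot a_1^{-1}\cdot(a_1\circ a_3)$ for all $a_1,a_2,a_3\in A$, where $a_1^{-1}$ is the inverse in $(A,\cdot)$.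
   Context: A skew brace is a set $A$ with two group operations $\cdot$ and $\circ$ such that $a\circ(b\cdot c) = (a\circ b)\cdot a^{-1}\cdot (a\circ c)$ for all $a,b,c\in A$. Note $(A,\cdot)=B\rtimes_\phi C$ and $(A,\circ)=B\ltimes_\psi C$ are groups. *)

theory Defs
  imports "HOL-Algebra.Algebra"
begin

definition sdp_dot ::
  "('b, 'x) monoid_scheme \<Rightarrow> ('c, 'y) monoid_scheme \<Rightarrow> ('c \<Rightarrow> 'b \<Rightarrow> 'b) \<Rightarrow> ('b \<times> 'c) monoid"
  where "sdp_dot B C phi =
    \<lparr>carrier = carrier B \<times> carrier C,
     monoid.mult = (\<lambda>(b1, c1) (b2, c2). (b1 \<otimes>\<^bsub>B\<^esub> phi c1 b2, c1 \<otimes>\<^bsub>C\<^esub> c2)),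
     monoid.one = (\<one>\<^bsub>B\<^esub>, \<one>\<^bsub>C\<^esub>)\<rparr>"

definition sdp_circ ::
  "('b, 'x) monoid_scheme \<Rightarrow> ('c, 'y) monoid_scheme \<Rightarrow> ('b \<Rightarrow> 'c \<Rightarrow> 'c) \<Rightarrow> ('b \<times> 'c) monoid"
  where "sdp_circ B C psi =
    \<lparr>carrier = carrier B \<times> carrier C,
     monoid.mult = (\<lambda>(b1, c1) (b2, c2). (b1 \<otimes>\<^bsub>B\<^esub> b2, c1 \<otimes>\<^bsub>C\<^esub> psi b1 c2)),
     monoid.one = (\<one>\<^bsub>B\<^esub>, \<one>\<^bsub>C\<^esub>)\<rparr>"

definition skew_brace :: "('a, 'x) monoid_scheme \<Rightarrow> ('a, 'y) monoid_scheme \<Rightarrow> bool"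
  where "skew_brace D E \<longleftrightarrow> group D \<and> group E \<and> carrier D = carrier E \<and>
    (\<forall>a\<in>carrier D. \<forall>b\<in>carrier D. \<forall>c\<in>carrier D.
       a \<otimes>\<^bsub>E\<^esub> (b \<otimes>\<^bsub>D\<^esub> c)
       = (a \<otimes>\<^bsub>E\<^esub> b) \<otimes>\<^bsub>D\<^esub> inv\<^bsub>D\<^esub> a \<otimes>\<^bsub>D\<^esub> (a \<otimes>\<^bsub>E\<^esub> c))"

end

theory Submission
  imports Defs
begin

lemma aut_facts:
  assumes G: "group G" and H: "group H" and f: "f \<in> hom H (AutoGroup G)"
  shows "\<And>c b. c \<in> carrier H \<Longrightarrow> b \<in> carrier G \<Longrightarrow> f c b \<in> carrier G"
    and "\<And>c x y. c \<in> carrier H \<Longrightarrow> x \<in> carrier G \<Longrightarrow> y \<in> carrier G \<Longrightarrow>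
           f c (x \<otimes>\<^bsub>G\<^esub> y) = f c x \<otimes>\<^bsub>G\<^esub> f c y"
    and "\<And>c d b. c \<in> carrier H \<Longrightarrow> d \<in> carrier H \<Longrightarrow> b \<in> carrier G \<Longrightarrow>
           f (c \<otimes>\<^bsub>H\<^esub> d) b = f c (f d b)"
    and "\<And>b. b \<in> carrier G \<Longrightarrow> f \<one>\<^bsub>H\<^esub> b = b"
proof -
  have mem: "\<And>c. c \<in> carrier H \<Longrightarrow> f c \<in> auto G"
    using f by (auto simp: hom_def AutoGroup_def BijGroup_def)
  show "\<And>c b. c \<in> carrier H \<Longrightarrow> b \<in> carrier G \<Longrightarrow> f c b \<in> carrier G"
    using mem by (auto simp: auto_def hom_def)
  show "\<And>c x y. c \<in> carrier H \<Longrightarrow> x \<in> carrier G \<Longrightarrow> y \<in> carrier G \<Longrightarrow>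
           f c (x \<otimes>\<^bsub>G\<^esub> y) = f c x \<otimes>\<^bsub>G\<^esub> f c y"
    using mem by (auto simp: auto_def hom_def)
  show "\<And>c d b. c \<in> carrier H \<Longrightarrow> d \<in> carrier H \<Longrightarrow> b \<in> carrier G \<Longrightarrow>
           f (c \<otimes>\<^bsub>H\<^esub> d) b = f c (f d b)"
  proof -
    fix c d b assume c: "c \<in> carrier H" and d: "d \<in> carrier H" and b: "b \<in> carrier G"
    have "f (c \<otimes>\<^bsub>H\<^esub> d) = f c \<otimes>\<^bsub>AutoGroup G\<^esub> f d"
      using f c d by (simp add: hom_def)
    then show "f (c \<otimes>\<^bsub>H\<^esub> d) b = f c (f d b)"
      using mem[OF c] mem[OF d] b by (simp add: AutoGroup_def BijGroup_def auto_def compose_def)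
  qed
  show "\<And>b. b \<in> carrier G \<Longrightarrow> f \<one>\<^bsub>H\<^esub> b = b"
  proof -
    fix b assume b: "b \<in> carrier G"
    interpret gh: group_hom H "AutoGroup G" f
      using G H f by (simp add: group_hom_def group_hom_axioms_def group.AutoGroup)
    have "f \<one>\<^bsub>H\<^esub> = \<one>\<^bsub>AutoGroup G\<^esub>" by simp
    then show "f \<one>\<^bsub>H\<^esub> b = b" using b by (simp add: AutoGroup_def BijGroup_def)
  qed
qed

lemma aut_one:
  assumes G: "group G" and H: "group H" and f: "f \<in> hom H (AutoGroup G)" and c: "c \<in> carrier H"
  shows "f c \<one>\<^bsub>G\<^esub> = \<one>\<^bsub>G\<^esub>"
proof -
  have "f c \<in> hom G G"
    using f c by (auto simp: hom_def AutoGroup_def BijGroup_def auto_def)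
  then interpret gh: group_hom G G "f c"
    using G by (simp add: group_hom_def group_hom_axioms_def)
  show ?thesis by simp
qed

theorem lemma8p1:
  fixes B :: "('b, 'x) monoid_scheme" and C :: "('c, 'y) monoid_scheme"
    and phi :: "'c \<Rightarrow> 'b \<Rightarrow> 'b" and psi :: "'b \<Rightarrow> 'c \<Rightarrow> 'c"
  assumes "group B" and "comm_group C"
    and "phi \<in> hom C (AutoGroup B)"
    and "psi \<in> hom B (AutoGroup C)"
    and "\<And>b c. b \<in> carrier B \<Longrightarrow> c \<in> carrier C \<Longrightarrow> phi (psi b c) = phi c"
  shows "skew_brace (sdp_dot B C phi) (sdp_circ B C psi)"
proof -
  interpret B: group B by fact
  interpret C: comm_group C by fact
  have gC: "group C" by (rule C.is_group)
  note ph = aut_facts[OF assms(1) gC assms(3)]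
  note ps = aut_facts[OF gC assms(1) assms(4)]
  note inv5 = assms(5)
  note ph1 = aut_one[OF assms(1) gC assms(3)]
  note ps1 = aut_one[OF gC assms(1) assms(4)]
  have gD: "group (sdp_dot B C phi)"
  proof (rule groupI)
    show "\<exists>y\<in>carrier (sdp_dot B C phi). y \<otimes>\<^bsub>sdp_dot B C phi\<^esub> x = \<one>\<^bsub>sdp_dot B C phi\<^esub>"
      if xin: "x \<in> carrier (sdp_dot B C phi)" for x
    proof -
      obtain b c where x: "x = (b, c)" "b \<in> carrier B" "c \<in> carrier C"
        using xin by (cases x) (auto simp: sdp_dot_def)
      have "phi (inv\<^bsub>C\<^esub> c) (inv\<^bsub>B\<^esub> b) \<otimes>\<^bsub>B\<^esub> phi (inv\<^bsub>C\<^esub> c) b = \<one>\<^bsub>B\<^esub>"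
        using x by (simp add: ph(2)[symmetric] ph1)
      moreover have "phi (inv\<^bsub>C\<^esub> c) (inv\<^bsub>B\<^esub> b) \<otimes>\<^bsub>B\<^esub> phi (inv\<^bsub>C\<^esub> c) b = phi (inv\<^bsub>C\<^esub> c) \<one>\<^bsub>B\<^esub>"
        using x by (simp add: ph(2)[symmetric])
      ultimately show ?thesis using x
        by (intro bexI[where x="(phi (inv\<^bsub>C\<^esub> c) (inv\<^bsub>B\<^esub> b), inv\<^bsub>C\<^esub> c)"])
           (auto simp: sdp_dot_def ph(1))
    qed
  qed (auto simp: sdp_dot_def ph B.m_assoc C.m_assoc)
  have gE: "group (sdp_circ B C psi)"
  proof (rule groupI)
    show "\<exists>y\<in>carrier (sdp_circ B C psi). y \<otimes>\<^bsub>sdp_circ B C psi\<^esub> x = \<one>\<^bsub>sdp_circ B C psi\<^esub>"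
      if xin: "x \<in> carrier (sdp_circ B C psi)" for x
    proof -
      obtain b c where x: "x = (b, c)" "b \<in> carrier B" "c \<in> carrier C"
        using xin by (cases x) (auto simp: sdp_circ_def)
      have "psi (inv\<^bsub>B\<^esub> b) (inv\<^bsub>C\<^esub> c) \<otimes>\<^bsub>C\<^esub> psi (inv\<^bsub>B\<^esub> b) c = psi (inv\<^bsub>B\<^esub> b) \<one>\<^bsub>C\<^esub>"
        using x by (simp add: ps(2)[symmetric])
      moreover have "psi (inv\<^bsub>B\<^esub> b) \<one>\<^bsub>C\<^esub> = \<one>\<^bsub>C\<^esub>"
      proof -
        have "psi (inv\<^bsub>B\<^esub> b) \<one>\<^bsub>C\<^esub> \<otimes>\<^bsub>C\<^esub> psi (inv\<^bsub>B\<^esub> b) \<one>\<^bsub>C\<^esub> = psi (inv\<^bsub>B\<^esub> b) \<one>\<^bsub>C\<^esub>"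
          using x by (simp add: ps(2)[symmetric])
        then show ?thesis using x ps(1) by (metis B.inv_closed C.l_cancel_one' C.one_closed)
      qed
      ultimately show ?thesis using x
        by (intro bexI[where x="(inv\<^bsub>B\<^esub> b, psi (inv\<^bsub>B\<^esub> b) (inv\<^bsub>C\<^esub> c))"])
           (auto simp: sdp_circ_def ps(1))
    qed
  qed (auto simp: sdp_circ_def ps B.m_assoc C.m_assoc)
  have linv: "\<And>b c. b \<in> carrier B \<Longrightarrow> c \<in> carrier C \<Longrightarrow>
      phi (inv\<^bsub>C\<^esub> c) (inv\<^bsub>B\<^esub> b) \<otimes>\<^bsub>B\<^esub> phi (inv\<^bsub>C\<^esub> c) b = \<one>\<^bsub>B\<^esub>"
    by (simp add: ph(2)[symmetric] ph1)
  have invD: "\<And>b c. b \<in> carrier B \<Longrightarrow> c \<in> carrier C \<Longrightarrow>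
      inv\<^bsub>sdp_dot B C phi\<^esub> (b, c) = (phi (inv\<^bsub>C\<^esub> c) (inv\<^bsub>B\<^esub> b), inv\<^bsub>C\<^esub> c)"
    by (rule group.inv_equality[OF gD]) (auto simp: sdp_dot_def linv ph(1))
  show ?thesis
    unfolding skew_brace_def
  proof (intro conjI ballI gD gE)
    show "carrier (sdp_dot B C phi) = carrier (sdp_circ B C psi)"
      by (simp add: sdp_dot_def sdp_circ_def)
    fix a1 a2 a3 assume a: "a1 \<in> carrier (sdp_dot B C phi)" "a2 \<in> carrier (sdp_dot B C phi)"
      "a3 \<in> carrier (sdp_dot B C phi)"
    obtain b1 c1 b2 c2 b3 c3 where ab: "a1 = (b1, c1)" "a2 = (b2, c2)" "a3 = (b3, c3)"
      and m: "b1 \<in> carrier B" "c1 \<in> carrier C" "b2 \<in> carrier B" "c2 \<in> carrier C"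
         "b3 \<in> carrier B" "c3 \<in> carrier C"
      using a by (cases a1; cases a2; cases a3) (auto simp: sdp_dot_def)
    have p1: "psi b1 c2 \<in> carrier C" "psi b1 c3 \<in> carrier C" using m ps(1) by auto
    have k: "(c1 \<otimes>\<^bsub>C\<^esub> psi b1 c2) \<otimes>\<^bsub>C\<^esub> inv\<^bsub>C\<^esub> c1 = psi b1 c2"
      using m p1 by (metis C.inv_closed C.m_assoc C.m_comm C.r_inv C.r_one)
    have k2: "\<And>x. x \<in> carrier B \<Longrightarrow>
        phi (c1 \<otimes>\<^bsub>C\<^esub> psi b1 c2) (phi (inv\<^bsub>C\<^esub> c1) x) = phi c2 x"
    proof -
      fix x assume x: "x \<in> carrier B"
      have "phi (c1 \<otimes>\<^bsub>C\<^esub> psi b1 c2) (phi (inv\<^bsub>C\<^esub> c1) x)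
          = phi ((c1 \<otimes>\<^bsub>C\<^esub> psi b1 c2) \<otimes>\<^bsub>C\<^esub> inv\<^bsub>C\<^esub> c1) x"
        using m p1 x by (simp add: ph(3))
      also have "\<dots> = phi c2 x" using k inv5 m by simp
      finally show "phi (c1 \<otimes>\<^bsub>C\<^esub> psi b1 c2) (phi (inv\<^bsub>C\<^esub> c1) x) = phi c2 x" .
    qed
    have k3: "phi ((c1 \<otimes>\<^bsub>C\<^esub> psi b1 c2) \<otimes>\<^bsub>C\<^esub> inv\<^bsub>C\<^esub> c1) = phi c2"
      using k inv5 m by simp
    have e1: "b1 \<otimes>\<^bsub>B\<^esub> (b2 \<otimes>\<^bsub>B\<^esub> phi c2 b3) =
        ((b1 \<otimes>\<^bsub>B\<^esub> b2) \<otimes>\<^bsub>B\<^esub> phi c2 (inv\<^bsub>B\<^esub> b1)) \<otimes>\<^bsub>B\<^esub> phi c2 (b1 \<otimes>\<^bsub>B\<^esub> b3)"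
    proof -
      have "phi c2 (inv\<^bsub>B\<^esub> b1) \<otimes>\<^bsub>B\<^esub> phi c2 (b1 \<otimes>\<^bsub>B\<^esub> b3) = phi c2 b3"
        using m by (simp add: ph(2)[symmetric] B.m_assoc[symmetric])
      then show ?thesis using m ph(1) by (simp add: B.m_assoc)
    qed
    have e2: "c1 \<otimes>\<^bsub>C\<^esub> psi b1 (c2 \<otimes>\<^bsub>C\<^esub> c3) =
        ((c1 \<otimes>\<^bsub>C\<^esub> psi b1 c2) \<otimes>\<^bsub>C\<^esub> inv\<^bsub>C\<^esub> c1) \<otimes>\<^bsub>C\<^esub> (c1 \<otimes>\<^bsub>C\<^esub> psi b1 c3)"
      using m p1 k by (simp add: ps(2) C.m_lcomm)
    show "a1 \<otimes>\<^bsub>sdp_circ B C psi\<^esub> (a2 \<otimes>\<^bsub>sdp_dot B C phi\<^esub> a3) =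
       a1 \<otimes>\<^bsub>sdp_circ B C psi\<^esub> a2 \<otimes>\<^bsub>sdp_dot B C phi\<^esub> inv\<^bsub>sdp_dot B C phi\<^esub> a1 \<otimes>\<^bsub>sdp_dot B C phi\<^esub>
       (a1 \<otimes>\<^bsub>sdp_circ B C psi\<^esub> a3)"
      unfolding ab invD[OF m(1,2)]
      using m p1 e1 e2 k2 k3 by (simp add: sdp_dot_def sdp_circ_def)
  qed
qed

end
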